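(* Let $N\ge K\ge1$, $C>0$, $\epsilon_p,\epsilon_l>0$, and let $\bm U=(U_1,\dots,U_N)$ be a vector of positive feature importances (fixed independently of the input). Consider the R$^3$eLU-forward procedure with dynamic privacy budget allocation: compute $\hat{\bm v}=ClipK(\bm v,C,K,N)$; set $p_i=\frac12+\frac{U_i}{\|\bm U\|_\infty}\big(\frac{e^{\epsilon_p/K}}{1+e^{\epsilon_p/K}}-\frac12\big)$; independently draw $s_i\sim\mathrm{Bernoulli}(p_i)$ and Laplace noise $L_i$ for coordinate $i$ calibrated to the allocated budget $\epsilon_l U_i/\sum_{j=1}^N U_j$ (i.e. $L_i\sim\mathrm{Lap}\big(0,\,2KC\sum_{j}U_j/(\epsilon_l U_i)\big)$); output $\tilde a_i=\max(\hat v_i+L_i,0)$ if $s_i=1$ and $\tilde a_i=0$ otherwise. Then this procedure is still $\epsilon$-differentially private with $\epsilon=\epsilon_p+\epsilon_l$.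
   Context: $ClipK(\bm{v},C,K,N)$: given $\bm{v}\in\mathbb{R}^N$, keep the $K$ largest entries of $\bm{v}$ and set all other entries to $0$; then clip each kept entry into the interval $[0,C]$. $\mathrm{Lap}(0,b)$ is the Laplace distribution with mean $0$ and scale $b$. A randomized mechanism $\mathcal{M}$ is $\epsilon$-DP if for any two inputs $x,x'$ and every measurable output set $S$, $\Pr[\mathcal{M}(x)\in S]\le e^{\epsilon}\Pr[\mathcal{M}(x')\in S]$. *)

theory Defs
  imports "HOL-Probability.Probability"
begin

text \<open>Inputs and outputs in R^N are functions nat => real; only indices i < N matter.\<close>

definition topK :: "(nat \<Rightarrow> real) \<Rightarrow> nat \<Rightarrow> nat \<Rightarrow> nat set" where
  "topK v K N = {i. i < N \<and> card {j. j < N \<and> (v j > v i \<or> (v j = v i \<and> j < i))} < K}"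

definition ClipK :: "(nat \<Rightarrow> real) \<Rightarrow> real \<Rightarrow> nat \<Rightarrow> nat \<Rightarrow> (nat \<Rightarrow> real)" where
  "ClipK v C K N = (\<lambda>i. if i \<in> topK v K N then min (max (v i) 0) C else 0)"

definition laplace_density :: "real \<Rightarrow> real \<Rightarrow> real" where
  "laplace_density b x = exp (- \<bar>x\<bar> / b) / (2 * b)"

definition Lap :: "real \<Rightarrow> real measure" where
  "Lap b = density lborel (\<lambda>x. ennreal (laplace_density b x))"

definition sup_norm :: "(nat \<Rightarrow> real) \<Rightarrow> nat \<Rightarrow> real" where
  "sup_norm U N = Max ((\<lambda>i. \<bar>U i\<bar>) ` {..<N})"

definition sel_prob :: "(nat \<Rightarrow> real) \<Rightarrow> nat \<Rightarrow> nat \<Rightarrow> real \<Rightarrow> nat \<Rightarrow> real" where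
  "sel_prob U N K eps_p i =
     1/2 + U i / sup_norm U N * (exp (eps_p / K) / (1 + exp (eps_p / K)) - 1/2)"

definition lap_scale :: "(nat \<Rightarrow> real) \<Rightarrow> nat \<Rightarrow> nat \<Rightarrow> real \<Rightarrow> real \<Rightarrow> nat \<Rightarrow> real" where
  "lap_scale U N K C eps_l i = 2 * K * C * (\<Sum>j<N. U j) / (eps_l * U i)"

definition coord_out ::
  "(nat \<Rightarrow> real) \<Rightarrow> nat \<Rightarrow> nat \<Rightarrow> real \<Rightarrow> real \<Rightarrow> real \<Rightarrow> (nat \<Rightarrow> real) \<Rightarrow> nat \<Rightarrow> real measure" where
  "coord_out U N K C eps_p eps_l v i =
     measure_pmf (bernoulli_pmf (sel_prob U N K eps_p i)) \<bind>
       (\<lambda>s. if s then distr (Lap (lap_scale U N K C eps_l i)) borel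
                         (\<lambda>l. max (ClipK v C K N i + l) 0)
            else return borel 0)"

definition R3eLU_forward ::
  "(nat \<Rightarrow> real) \<Rightarrow> nat \<Rightarrow> nat \<Rightarrow> real \<Rightarrow> real \<Rightarrow> real \<Rightarrow> (nat \<Rightarrow> real) \<Rightarrow> (nat \<Rightarrow> real) measure" where
  "R3eLU_forward U N K C eps_p eps_l v = PiM {..<N} (coord_out U N K C eps_p eps_l v)"

definition output_space :: "nat \<Rightarrow> (nat \<Rightarrow> real) measure" where
  "output_space N = PiM {..<N} (\<lambda>_. borel)"

definition differentially_private ::
  "real \<Rightarrow> ('x \<Rightarrow> 'y measure) \<Rightarrow> 'y measure \<Rightarrow> bool" where
  "differentially_private eps M Y \<longleftrightarrow>
     (\<forall>x x' S. S \<in> sets Y \<longrightarrow> emeasure (M x) S \<le> ennreal (exp eps) * emeasure (M x') S)"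

end

theory Submission imports Defs begin

lemma ld_nonneg: "b > 0 \<Longrightarrow> 0 \<le> laplace_density b x"
  by (simp add: laplace_density_def)

lemma ld_shift:
  assumes b: "b > 0"
  shows "laplace_density b (y - a) \<le> exp (\<bar>a - a'\<bar> / b) * laplace_density b (y - a')"
proof -
  have "- \<bar>y - a\<bar> / b \<le> \<bar>a - a'\<bar> / b + - \<bar>y - a'\<bar> / b"
    using b by (simp add: divide_simps)
  then have "exp (- \<bar>y - a\<bar> / b) \<le> exp (\<bar>a - a'\<bar> / b) * exp (- \<bar>y - a'\<bar> / b)"
    by (simp add: exp_add[symmetric])
  then show ?thesis using b unfolding laplace_density_def
    by (simp add: divide_simps)
qed

lemma Lap_subprob:
  assumes b: "b > 0"
  shows "subprob_space (Lap b)"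
proof
  show "space (Lap b) \<noteq> {}" by (simp add: Lap_def)
  let ?f = "\<lambda>x. ennreal (laplace_density b x)"
  have half: "(\<integral>\<^sup>+x. ?f x * indicator {0..} x \<partial>lborel) = 1/2"
  proof -
    have e2: "ennreal (z / 2) = ennreal z / 2" if "z \<ge> 0" for z :: real
      using divide_ennreal[of z 2] that by simp
    have eq: "?f x * indicator {0..} x = ennreal (exponential_density (1/b) x) / 2" for x
      using b by (auto simp: laplace_density_def exponential_density_def indicator_def
          e2[symmetric] field_simps)
    have "(\<integral>\<^sup>+x. ennreal (exponential_density (1/b) x) \<partial>lborel) = 1"
    proof -
      interpret prob_space "density lborel (exponential_density (1/b))"
        using b by (intro prob_space_exponential_density) simp
      show ?thesis using emeasure_space_1
        by (simp add: emeasure_density)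
    qed
    then show ?thesis unfolding eq
      by (subst nn_integral_divide) (auto)
  qed
  have neg: "(\<integral>\<^sup>+x. ?f x * indicator {..<0} x \<partial>lborel) \<le> 1/2"
  proof -
    have "(\<integral>\<^sup>+x. ?f x * indicator {..<0} x \<partial>lborel)
        = (\<integral>\<^sup>+x. ?f x * indicator {..<0} x \<partial>distr lborel borel uminus)"
      by (simp add: lborel_distr_uminus)
    also have "\<dots> = (\<integral>\<^sup>+x. ?f (-x) * indicator {..<0} (-x) \<partial>lborel)"
      by (subst nn_integral_distr) (auto simp: laplace_density_def)
    also have "\<dots> \<le> (\<integral>\<^sup>+x. ?f x * indicator {0..} x \<partial>lborel)"
      by (intro nn_integral_mono) (auto simp: laplace_density_def indicator_def)
    finally show ?thesis using half by simp
  qed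
  have "emeasure (Lap b) (space (Lap b)) = (\<integral>\<^sup>+x. ?f x \<partial>lborel)"
    unfolding Lap_def by (subst emeasure_density) (auto simp: laplace_density_def)
  also have "\<dots> = (\<integral>\<^sup>+x. ?f x * indicator {0..} x + ?f x * indicator {..<0} x \<partial>lborel)"
    by (intro nn_integral_cong) (auto simp: indicator_def)
  also have "\<dots> = (\<integral>\<^sup>+x. ?f x * indicator {0..} x \<partial>lborel) + (\<integral>\<^sup>+x. ?f x * indicator {..<0} x \<partial>lborel)"
    by (subst nn_integral_add) (auto simp: laplace_density_def)
  also have "\<dots> \<le> 1/2 + 1/2" using half neg by (simp add: add_left_mono)
  also have "\<dots> = 1"
  proof -
    have h: "(1::ennreal)/2 = ennreal (1/2)" using divide_ennreal[of 1 2] by simp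
    have "ennreal (1/2) + ennreal (1/2) = ennreal (1/2 + 1/2)" by (subst ennreal_plus) auto
    then show ?thesis unfolding h by simp
  qed
  finally show "emeasure (Lap b) (space (Lap b)) \<le> 1" .
qed

lemma distr_bound:
  assumes b: "b > 0" and g[measurable]: "g \<in> borel_measurable borel"
  shows "(\<integral>\<^sup>+x. g x \<partial>distr (Lap b) borel (\<lambda>l. max (a+l) 0))
     \<le> ennreal (exp (\<bar>a - a'\<bar> / b)) * (\<integral>\<^sup>+x. g x \<partial>distr (Lap b) borel (\<lambda>l. max (a'+l) 0))"
proof -
  have shift: "(\<integral>\<^sup>+x. g x \<partial>distr (Lap b) borel (\<lambda>l. max (c+l) 0))
      = (\<integral>\<^sup>+y. ennreal (laplace_density b (y - c)) * g (max y 0) \<partial>lborel)" for c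
  proof -
    have "(\<integral>\<^sup>+x. g x \<partial>distr (Lap b) borel (\<lambda>l. max (c+l) 0))
        = (\<integral>\<^sup>+l. g (max (c+l) 0) \<partial>Lap b)"
      by (subst nn_integral_distr) (auto simp: Lap_def)
    also have "\<dots> = (\<integral>\<^sup>+l. ennreal (laplace_density b l) * g (max (c+l) 0) \<partial>lborel)"
      unfolding Lap_def by (subst nn_integral_density) (auto simp: laplace_density_def)
    also have "\<dots> = (\<integral>\<^sup>+l. ennreal (laplace_density b ((c + l) - c)) * g (max (c+l) 0) \<partial>lborel)"
      by simp
    also have "\<dots> = (\<integral>\<^sup>+y. ennreal (laplace_density b (y - c)) * g (max y 0) \<partial>distr lborel borel ((+) c))"
      by (subst nn_integral_distr) (auto simp: laplace_density_def)
    also have "\<dots> = (\<integral>\<^sup>+y. ennreal (laplace_density b (y - c)) * g (max y 0) \<partial>lborel)"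
      by (simp add: lborel_distr_plus)
    finally show ?thesis .
  qed
  have "(\<integral>\<^sup>+y. ennreal (laplace_density b (y - a)) * g (max y 0) \<partial>lborel)
     \<le> (\<integral>\<^sup>+y. ennreal (exp (\<bar>a - a'\<bar> / b)) * (ennreal (laplace_density b (y - a')) * g (max y 0)) \<partial>lborel)"
  proof (intro nn_integral_mono)
    fix y
    have "ennreal (laplace_density b (y - a)) \<le> ennreal (exp (\<bar>a - a'\<bar> / b)) * ennreal (laplace_density b (y - a'))"
      using ld_shift[OF b, of y a a'] ld_nonneg[OF b]
      by (simp add: ennreal_mult'[symmetric] ennreal_leI)
    then show "ennreal (laplace_density b (y - a)) * g (max y 0) \<le> ennreal (exp (\<bar>a - a'\<bar> / b)) * (ennreal (laplace_density b (y - a')) * g (max y 0))"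
      by (metis mult.assoc mult_right_mono zero_le)
  qed
  also have "\<dots> = ennreal (exp (\<bar>a - a'\<bar> / b)) * (\<integral>\<^sup>+y. ennreal (laplace_density b (y - a')) * g (max y 0) \<partial>lborel)"
    by (subst nn_integral_cmult) (auto simp: laplace_density_def)
  finally show ?thesis unfolding shift .
qed

lemma bind_bound:
  fixes B :: "bool pmf" and Kv Kw :: "bool \<Rightarrow> real measure"
  assumes Kv: "\<And>s. Kv s \<in> space (subprob_algebra borel)"
    and Kw: "\<And>s. Kw s \<in> space (subprob_algebra borel)"
    and g[measurable]: "g \<in> borel_measurable borel"
    and le: "\<And>s. (\<integral>\<^sup>+x. g x \<partial>Kv s) \<le> c * (\<integral>\<^sup>+x. g x \<partial>Kw s)"
  shows "(\<integral>\<^sup>+x. g x \<partial>(measure_pmf B \<bind> Kv)) \<le> c * (\<integral>\<^sup>+x. g x \<partial>(measure_pmf B \<bind> Kw))"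
proof -
  have "(\<integral>\<^sup>+x. g x \<partial>(measure_pmf B \<bind> Kv)) = (\<integral>\<^sup>+s. (\<integral>\<^sup>+x. g x \<partial>Kv s) \<partial>measure_pmf B)"
    by (rule nn_integral_bind[OF g]) (use Kv in auto)
  also have "\<dots> \<le> (\<integral>\<^sup>+s. c * (\<integral>\<^sup>+x. g x \<partial>Kw s) \<partial>measure_pmf B)"
    by (intro nn_integral_mono le)
  also have "\<dots> = c * (\<integral>\<^sup>+s. (\<integral>\<^sup>+x. g x \<partial>Kw s) \<partial>measure_pmf B)"
    by (subst nn_integral_cmult) auto
  also have "(\<integral>\<^sup>+s. (\<integral>\<^sup>+x. g x \<partial>Kw s) \<partial>measure_pmf B) = (\<integral>\<^sup>+x. g x \<partial>(measure_pmf B \<bind> Kw))"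
    by (rule nn_integral_bind[OF g, symmetric]) (use Kw in auto)
  finally show ?thesis .
qed

lemma PiM_nn_le:
  fixes M M' :: "'i \<Rightarrow> 'a measure" and c :: "'i \<Rightarrow> ennreal"
  assumes fin: "finite I"
    and psM: "product_sigma_finite M" and psM': "product_sigma_finite M'"
    and sets_eq: "\<And>i. sets (M i) = sets (M' i)"
    and base: "\<And>i g. i \<in> I \<Longrightarrow> g \<in> borel_measurable (M i) \<Longrightarrow>
                 (\<integral>\<^sup>+x. g x \<partial>M i) \<le> c i * (\<integral>\<^sup>+x. g x \<partial>M' i)"
  shows "f \<in> borel_measurable (PiM I M) \<Longrightarrow>
     (\<integral>\<^sup>+x. f x \<partial>PiM I M) \<le> (\<Prod>i\<in>I. c i) * (\<integral>\<^sup>+x. f x \<partial>PiM I M')"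
  using fin base
proof (induction I arbitrary: f rule: finite_induct)
  case empty
  then show ?case by (simp add: PiM_empty)
next
  case (insert i I)
  interpret P: product_sigma_finite M by fact
  interpret P': product_sigma_finite M' by fact
  have setsP: "sets (PiM J M) = sets (PiM J M')" for J
    by (rule sets_PiM_cong) (auto simp: sets_eq)
  have fm[measurable]: "f \<in> borel_measurable (PiM (insert i I) M)" by fact
  have fm'[measurable]: "f \<in> borel_measurable (PiM (insert i I) M')"
    using fm measurable_cong_sets[OF setsP refl] by blast
  interpret S': sigma_finite_measure "PiM I M'"
    using P'.sigma_finite_measures  insert.hyps by (simp add: P'.sigma_finite)
  have h'm: "(\<lambda>y. \<integral>\<^sup>+x. f (x(i:=y)) \<partial>PiM I M') \<in> borel_measurable (M' i)"
    by measurable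
  have h'mM: "(\<lambda>y. \<integral>\<^sup>+x. f (x(i:=y)) \<partial>PiM I M') \<in> borel_measurable (M i)"
    using h'm measurable_cong_sets[OF sets_eq refl] by blast
  have "(\<integral>\<^sup>+x. f x \<partial>PiM (insert i I) M) = (\<integral>\<^sup>+ y. (\<integral>\<^sup>+ x. f (x(i := y)) \<partial>(Pi\<^sub>M I M)) \<partial>(M i))"
    by (rule P.product_nn_integral_insert_rev) (use insert in auto)
  also have "\<dots> \<le> (\<integral>\<^sup>+ y. (\<Prod>j\<in>I. c j) * (\<integral>\<^sup>+ x. f (x(i := y)) \<partial>(Pi\<^sub>M I M')) \<partial>(M i))"
  proof (rule nn_integral_mono)
    fix y assume y: "y \<in> space (M i)"
    have "(\<lambda>x. f (x(i := y))) \<in> borel_measurable (PiM I M)"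
      using y insert.hyps by measurable
    then show "(\<integral>\<^sup>+ x. f (x(i := y)) \<partial>(Pi\<^sub>M I M)) \<le> (\<Prod>j\<in>I. c j) * (\<integral>\<^sup>+ x. f (x(i := y)) \<partial>(Pi\<^sub>M I M'))"
      using insert.IH insert.prems by auto
  qed
  also have "\<dots> \<le> c i * (\<integral>\<^sup>+ y. (\<Prod>j\<in>I. c j) * (\<integral>\<^sup>+ x. f (x(i := y)) \<partial>(Pi\<^sub>M I M')) \<partial>(M' i))"
    by (rule insert.prems) (use h'mM in auto)
  also have "\<dots> = c i * (\<Prod>j\<in>I. c j) * (\<integral>\<^sup>+ y. (\<integral>\<^sup>+ x. f (x(i := y)) \<partial>(Pi\<^sub>M I M')) \<partial>(M' i))"
    by (subst nn_integral_cmult) (use h'm in \<open>auto simp: mult.assoc\<close>)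
  also have "(\<integral>\<^sup>+ y. (\<integral>\<^sup>+ x. f (x(i := y)) \<partial>(Pi\<^sub>M I M')) \<partial>(M' i)) = (\<integral>\<^sup>+x. f x \<partial>PiM (insert i I) M')"
    by (rule P'.product_nn_integral_insert_rev[symmetric]) (use insert in auto)
  finally show ?case using insert.hyps by (simp add: mult.assoc)
qed

lemma sp_sf: "subprob_space M \<Longrightarrow> sigma_finite_measure M"
proof -
  assume "subprob_space M"
  then interpret subprob_space M .
  show ?thesis by (rule sigma_finite_measure_axioms)
qed

lemma ClipK_range: "0 < C \<Longrightarrow> 0 \<le> ClipK v C K N i \<and> ClipK v C K N i \<le> C"
  unfolding ClipK_def by auto

lemma kernel_space:
  assumes "b > 0"
  shows "(if s then distr (Lap b) borel (\<lambda>l. max (a + l) 0) else return borel (0::real))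
           \<in> space (subprob_algebra borel)"
proof (cases s)
  case True
  interpret subprob_space "Lap b" using Lap_subprob[OF assms] .
  have "subprob_space (distr (Lap b) borel (\<lambda>l. max (a + l) 0))"
    by (rule subprob_space_distr) (auto simp: Lap_def)
  then show ?thesis using True by (simp add: space_subprob_algebra)
next
  case False
  then show ?thesis by (simp add: space_subprob_algebra subprob_space_return)
qed

theorem corollary6:
  fixes N K :: nat and C eps_p eps_l :: real and U :: "nat \<Rightarrow> real"
  assumes "1 \<le> K" and "K \<le> N" and "C > 0" and "eps_p > 0" and "eps_l > 0"
    and "\<And>i. i < N \<Longrightarrow> U i > 0"
  shows "differentially_private (eps_p + eps_l)
           (R3eLU_forward U N K C eps_p eps_l) (output_space N)"
proof -
  note K1 = assms(1) and KN = assms(2) and Cpos = assms(3) and ep = assms(4) and el = assms(5)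
    and Upos = assms(6)
  define SU where "SU = (\<Sum>j<N. U j)"
  have SUpos: "SU > 0" unfolding SU_def
  proof -
    have "N > 0" using KN K1 by simp
    then show "(\<Sum>j<N. U j) > 0" using Upos by (intro sum_pos) auto
  qed
  define b where "b i = lap_scale U N K C eps_l i" for i
  have bpos: "b i > 0" if "i < N" for i
    using Upos[OF that] SUpos K1 Cpos el unfolding b_def lap_scale_def SU_def[symmetric]
    by (intro divide_pos_pos mult_pos_pos) auto
  define Kr where "Kr v i s = (if s then distr (Lap (b i)) borel (\<lambda>l. max (ClipK v C K N i + l) 0)
            else return borel (0::real))" for v i s
  define M where "M v i = (if i < N then coord_out U N K C eps_p eps_l v i else return borel 0)" for v i
  have co: "coord_out U N K C eps_p eps_l v i = measure_pmf (bernoulli_pmf (sel_prob U N K eps_p i)) \<bind> Kr v i"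
    for v i unfolding coord_out_def Kr_def b_def ..
  have Kr_sp: "Kr v i s \<in> space (subprob_algebra borel)" if "i < N" for v i s
    unfolding Kr_def by (rule kernel_space[OF bpos[OF that]])
  have M_sp: "M v i \<in> space (subprob_algebra borel)" for v i
  proof (cases "i < N")
    case True
    have "subprob_space (coord_out U N K C eps_p eps_l v i)"
      unfolding co by (rule subprob_space_bind)
        (use Kr_sp[OF True] in \<open>auto simp: subprob_space_measure_pmf\<close>)
    moreover have "sets (coord_out U N K C eps_p eps_l v i) = sets borel"
      unfolding co by (rule sets_bind) (use Kr_sp[OF True] in \<open>auto simp: space_subprob_algebra\<close>)
    ultimately show ?thesis using True by (simp add: M_def space_subprob_algebra)
  next
    case False
    then show ?thesis by (simp add: M_def space_subprob_algebra subprob_space_return)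
  qed
  have M_sets: "sets (M v i) = sets borel" for v i
    using M_sp[of v i] by (simp add: space_subprob_algebra)
  have psf: "product_sigma_finite (M v)" for v
    unfolding product_sigma_finite_def
    using M_sp by (auto simp: space_subprob_algebra intro: sp_sf)
  have R: "R3eLU_forward U N K C eps_p eps_l v = PiM {..<N} (M v)" for v
    unfolding R3eLU_forward_def by (rule PiM_cong) (auto simp: M_def)
  define c where "c i = ennreal (exp (C / b i))" for i
  show ?thesis
    unfolding differentially_private_def
  proof (intro allI impI)
    fix v w :: "nat \<Rightarrow> real" and S
    assume S: "S \<in> sets (output_space N)"
    have base: "(\<integral>\<^sup>+x. g x \<partial>M v i) \<le> c i * (\<integral>\<^sup>+x. g x \<partial>M w i)"
      if i: "i \<in> {..<N}" and g: "g \<in> borel_measurable (M v i)" for i g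
    proof -
      have i': "i < N" using i by simp
      have g'[measurable]: "g \<in> borel_measurable borel"
        using g measurable_cong_sets[OF M_sets refl] by blast
      have c1: "1 \<le> c i" unfolding c_def using bpos[OF i'] Cpos by simp
      have diff: "\<bar>ClipK v C K N i - ClipK w C K N i\<bar> \<le> C"
        using ClipK_range[OF Cpos, of v K N i] ClipK_range[OF Cpos, of w K N i] by linarith
      have "(\<integral>\<^sup>+x. g x \<partial>Kr v i s) \<le> c i * (\<integral>\<^sup>+x. g x \<partial>Kr w i s)" for s
      proof (cases s)
        case True
        have "(\<integral>\<^sup>+x. g x \<partial>Kr v i s) \<le> ennreal (exp (\<bar>ClipK v C K N i - ClipK w C K N i\<bar> / b i)) * (\<integral>\<^sup>+x. g x \<partial>Kr w i s)"
          unfolding Kr_def using True by (simp add: distr_bound[OF bpos[OF i'] g'])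
        also have "\<dots> \<le> c i * (\<integral>\<^sup>+x. g x \<partial>Kr w i s)"
          unfolding c_def using diff bpos[OF i']
          by (intro mult_right_mono ennreal_leI) (auto simp: divide_right_mono)
        finally show ?thesis .
      next
        case False
        have "(\<integral>\<^sup>+x. g x \<partial>Kr v i s) = 1 * (\<integral>\<^sup>+x. g x \<partial>Kr w i s)"
          unfolding Kr_def using False by (simp add: nn_integral_return)
        also have "\<dots> \<le> c i * (\<integral>\<^sup>+x. g x \<partial>Kr w i s)"
          by (intro mult_right_mono c1) auto
        finally show ?thesis .
      qed
      then show ?thesis
        unfolding M_def using i' co
        by (simp add: bind_bound[OF Kr_sp[OF i'] Kr_sp[OF i'] g'])
    qed
    have setsS: "S \<in> sets (PiM {..<N} (M v))"
      using S unfolding output_space_def by (subst sets_PiM_cong[OF refl M_sets]) auto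
    have "emeasure (PiM {..<N} (M v)) S = (\<integral>\<^sup>+x. indicator S x \<partial>PiM {..<N} (M v))"
      using setsS by simp
    also have "\<dots> \<le> (\<Prod>i\<in>{..<N}. c i) * (\<integral>\<^sup>+x. indicator S x \<partial>PiM {..<N} (M w))"
      by (rule PiM_nn_le[OF _ psf psf]) (use setsS base M_sets in auto)
    also have "(\<integral>\<^sup>+x. indicator S x \<partial>PiM {..<N} (M w)) = emeasure (PiM {..<N} (M w)) S"
      using S unfolding output_space_def by (subst nn_integral_indicator) (auto simp: sets_PiM_cong[OF refl M_sets])
    also have "(\<Prod>i\<in>{..<N}. c i) \<le> ennreal (exp (eps_p + eps_l))"
    proof -
      have pe: "(\<Prod>i\<in>{..<N}. c i) = ennreal (exp (\<Sum>i<N. C / b i))"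
        unfolding c_def by (simp add: prod_ennreal exp_sum)
      have "(\<Sum>i<N. C / b i) = (\<Sum>i<N. (eps_l / (2 * K * SU)) * U i)"
      proof (rule sum.cong)
        fix i assume "i \<in> {..<N}"
        then have "U i > 0" using Upos by auto
        then show "C / b i = (eps_l / (2 * K * SU)) * U i"
          unfolding b_def lap_scale_def SU_def[symmetric] using Cpos SUpos K1 el
          by (simp add: field_simps)
      qed simp
      also have "\<dots> = (eps_l / (2 * K * SU)) * SU"
        unfolding SU_def by (rule sum_distrib_left[symmetric])
      also have "\<dots> = eps_l / (2 * K)"
        using SUpos by (simp add: field_simps)
      also have "\<dots> \<le> eps_p + eps_l"
      proof -
        have "real K \<ge> 1" using K1 by simp
        then have "eps_l \<le> eps_l * (real K * 2)" using el by (simp add: mult_le_cancel_left1)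
        moreover have "0 \<le> eps_p * (real K * 2)" using ep by simp
        ultimately have "eps_l \<le> eps_l * (real K * 2) + eps_p * (real K * 2)" by linarith
        then show ?thesis using K1 by (simp add: field_simps)
      qed
      finally show ?thesis unfolding pe by (intro ennreal_leI) simp
    qed
    finally show "emeasure (R3eLU_forward U N K C eps_p eps_l v) S
       \<le> ennreal (exp (eps_p + eps_l)) * emeasure (R3eLU_forward U N K C eps_p eps_l w) S"
      unfolding R by (simp add: mult_right_mono)
  qed
qed

end
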